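(* Let $\mathcal{I}$ be a finite set of items and $\mathcal{D}$ a transaction database over $\mathcal{I}$. Let $t_o \in \mathcal{D}$ be a transaction with itemset $T_o \subseteq \mathcal{I}$, and let $\mathcal{D}^- = \mathcal{D} \setminus \{t_o\}$. Then a closed itemset $c \in \mathcal{C}(\mathcal{D})$ fails to be closed in $\mathcal{D}^-$ (i.e. $c \in \mathcal{C}(\mathcal{D}) \setminus \mathcal{C}(\mathcal{D}^-)$) if and only if there exists $c_g \in \mathcal{C}(\mathcal{D})$ with $c = c_g \cap T_o$ and $\sigma_{\mathcal{D}}(c_g) = \sigma_{\mathcal{D}}(c) - 1$. In other words, $$\mathcal{C}(\mathcal{D}) \setminus \mathcal{C}(\mathcal{D}^-) = \{c \in \mathcal{C}(\mathcal{D}) \mid \exists c_g \in \mathcal{C}(\mathcal{D}) : c = c_g \cap T_o,\ \sigma_{\mathcal{D}}(c_g) = \sigma_{\mathcal{D}}(c) - 1\}.$$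
   Context: A transaction database $\mathcal{D}$ over a finite item set $\mathcal{I}$ is a finite set of transactions, each a pair $(j, Z)$ with $j$ a transaction identifier (tid, all tids distinct) and $Z \subseteq \mathcal{I}$ an itemset. For $X \subseteq \mathcal{I}$, its support set is $\tau_{\mathcal{D}}(X) = \{ j \mid (j,Z) \in \mathcal{D},\ X \subseteq Z\}$ and its support is $\sigma_{\mathcal{D}}(X) = |\tau_{\mathcal{D}}(X)|$. An itemset $X \subseteq \mathcal{I}$ is closed in $\mathcal{D}$ if no proper superset $Y \supsetneq X$ (with $Y \subseteq \mathcal{I}$) has $\sigma_{\mathcal{D}}(Y) = \sigma_{\mathcal{D}}(X)$; $\mathcal{C}(\mathcal{D})$ denotes the family of all closed itemsets of $\mathcal{D}$ (in particular $\mathcal{I}$ itself is always closed). A closed itemset of $\mathcal{D}$ that is not closed in $\mathcal{D}^-$ is called obsolete; a $c_g$ as in the claim is called a genitor of $c$. *)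

theory Defs
  imports Main
begin

definition tids_distinct :: "('t \<times> 'i set) set \<Rightarrow> bool" where
  "tids_distinct D \<longleftrightarrow> (\<forall>j Z Z'. (j, Z) \<in> D \<longrightarrow> (j, Z') \<in> D \<longrightarrow> Z = Z')"

definition transaction_db :: "'i set \<Rightarrow> ('t \<times> 'i set) set \<Rightarrow> bool" where
  "transaction_db I D \<longleftrightarrow> finite D \<and> tids_distinct D \<and> (\<forall>(j, Z) \<in> D. Z \<subseteq> I)"

definition supp_set :: "('t \<times> 'i set) set \<Rightarrow> 'i set \<Rightarrow> 't set" where
  "supp_set D X = {j. \<exists>Z. (j, Z) \<in> D \<and> X \<subseteq> Z}"

definition supp :: "('t \<times> 'i set) set \<Rightarrow> 'i set \<Rightarrow> nat" where
  "supp D X = card (supp_set D X)"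

definition closed_in :: "'i set \<Rightarrow> ('t \<times> 'i set) set \<Rightarrow> 'i set \<Rightarrow> bool" where
  "closed_in I D X \<longleftrightarrow> X \<subseteq> I \<and> \<not> (\<exists>Y. X \<subset> Y \<and> Y \<subseteq> I \<and> supp D Y = supp D X)"

definition closed_sets :: "'i set \<Rightarrow> ('t \<times> 'i set) set \<Rightarrow> 'i set set" where
  "closed_sets I D = {X. closed_in I D X}"

end

theory Submission
  imports Defs
begin

definition cl :: "'i set \<Rightarrow> ('t \<times> 'i set) set \<Rightarrow> 'i set \<Rightarrow> 'i set" where
  "cl I D X = {i\<in>I. \<forall>j' Z. (j',Z) \<in> D \<longrightarrow> j' \<in> supp_set D X \<longrightarrow> i \<in> Z}"

lemma closed_sub: "closed_in I D X \<Longrightarrow> X \<subseteq> I"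
  unfolding closed_in_def by (elim conjE)

lemma closed_no: "closed_in I D X \<Longrightarrow> X \<subset> Y \<Longrightarrow> Y \<subseteq> I \<Longrightarrow> supp D Y \<noteq> supp D X"
  unfolding closed_in_def by auto

lemma not_closedI: "X \<subset> Y \<Longrightarrow> Y \<subseteq> I \<Longrightarrow> supp D Y = supp D X \<Longrightarrow> \<not> closed_in I D X"
  unfolding closed_in_def by auto

lemma not_closedE: "\<not> closed_in I D X \<Longrightarrow> X \<subseteq> I \<Longrightarrow> \<exists>Y. X \<subset> Y \<and> Y \<subseteq> I \<and> supp D Y = supp D X"
  unfolding closed_in_def by blast

lemma fin_S: "finite D \<Longrightarrow> finite (supp_set D X)"
proof -
  assume "finite D"
  have "supp_set D X \<subseteq> fst ` D" unfolding supp_set_def by force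
  thus ?thesis using \<open>finite D\<close> finite_subset by blast
qed

lemma S_mono: "X \<subseteq> Y \<Longrightarrow> supp_set D Y \<subseteq> supp_set D X"
  unfolding supp_set_def by blast

lemma S_inD: "tids_distinct D \<Longrightarrow> (j',Z) \<in> D \<Longrightarrow> j' \<in> supp_set D X \<Longrightarrow> X \<subseteq> Z"
  unfolding supp_set_def tids_distinct_def by blast

lemma cl_sup: "tids_distinct D \<Longrightarrow> X \<subseteq> I \<Longrightarrow> X \<subseteq> cl I D X"
  unfolding cl_def using S_inD by fastforce

lemma cl_sub: "cl I D X \<subseteq> I" unfolding cl_def by blast

lemma S_cl: "tids_distinct D \<Longrightarrow> X \<subseteq> I \<Longrightarrow> supp_set D (cl I D X) = supp_set D X"
proof
  assume t: "tids_distinct D" and x: "X \<subseteq> I"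
  show "supp_set D (cl I D X) \<subseteq> supp_set D X" using S_mono[OF cl_sup[OF t x]] .
  show "supp_set D X \<subseteq> supp_set D (cl I D X)"
  proof
    fix j' assume j: "j' \<in> supp_set D X"
    then obtain Z where z: "(j',Z) \<in> D" "X \<subseteq> Z" unfolding supp_set_def by blast
    have "cl I D X \<subseteq> Z" unfolding cl_def using z j by blast
    thus "j' \<in> supp_set D (cl I D X)" using z unfolding supp_set_def by blast
  qed
qed

lemma S_eq: "finite D \<Longrightarrow> X \<subseteq> Y \<Longrightarrow> supp D Y = supp D X \<Longrightarrow> supp_set D Y = supp_set D X"
proof -
  assume f: "finite D" and xy: "X \<subseteq> Y" and e: "supp D Y = supp D X"
  have "supp_set D Y \<subseteq> supp_set D X" using S_mono[OF xy] .
  moreover have "card (supp_set D Y) = card (supp_set D X)" using e unfolding supp_def .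
  ultimately show ?thesis using card_subset_eq[OF fin_S[OF f]] by blast
qed

lemma cl_closed: assumes "finite D" "tids_distinct D" "X \<subseteq> I"
  shows "closed_in I D (cl I D X)"
  unfolding closed_in_def
proof (intro conjI notI)
  show "cl I D X \<subseteq> I" by (rule cl_sub)
  assume "\<exists>Y. cl I D X \<subset> Y \<and> Y \<subseteq> I \<and> supp D Y = supp D (cl I D X)"
  then obtain Y where y: "cl I D X \<subset> Y" "Y \<subseteq> I" "supp D Y = supp D (cl I D X)" by blast
  have "cl I D X \<subseteq> Y" using y(1) by (rule psubset_imp_subset)
  hence e0: "supp_set D Y = supp_set D (cl I D X)" using S_eq[OF assms(1) _ y(3)] by blast
  have e: "supp_set D Y = supp_set D X" using e0 S_cl[OF assms(2,3)] by simp
  have "Y \<subseteq> cl I D X"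
  proof
    fix i assume i: "i \<in> Y"
    have "\<forall>j' Z. (j',Z) \<in> D \<longrightarrow> j' \<in> supp_set D X \<longrightarrow> i \<in> Z"
    proof (intro allI impI)
      fix j' Z assume "(j',Z) \<in> D" "j' \<in> supp_set D X"
      hence "Y \<subseteq> Z" using S_inD[OF assms(2)] e by metis
      thus "i \<in> Z" using i by blast
    qed
    thus "i \<in> cl I D X" unfolding cl_def using i y(2) by blast
  qed
  thus False using y(1) by blast
qed

lemma closed_cl: assumes "tids_distinct D" "closed_in I D X" shows "cl I D X = X"
proof -
  have x: "X \<subseteq> I" using closed_sub[OF assms(2)] .
  have "X \<subseteq> cl I D X" using cl_sup[OF assms(1) x] .
  moreover have "supp D (cl I D X) = supp D X" unfolding supp_def using S_cl[OF assms(1) x] by simp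
  ultimately show ?thesis
  proof (cases "X = cl I D X")
    case False
    hence "X \<subset> cl I D X" using \<open>X \<subseteq> cl I D X\<close> by blast
    thus ?thesis using not_closedI[OF _ cl_sub \<open>supp D (cl I D X) = supp D X\<close>] assms(2) by blast
  qed simp
qed

lemma S_minus: "tids_distinct D \<Longrightarrow> (j,To) \<in> D \<Longrightarrow>
   supp_set (D - {(j,To)}) X = supp_set D X - {j}"
  unfolding supp_set_def tids_distinct_def by auto

theorem mainTheorem2:
  fixes I :: "'i set" and D :: "('t \<times> 'i set) set" and j :: 't and To :: "'i set"
  assumes "finite I"
    and "transaction_db I D"
    and "(j, To) \<in> D"
  shows "closed_sets I D - closed_sets I (D - {(j, To)}) =
    {c \<in> closed_sets I D. \<exists>cg \<in> closed_sets I D. c = cg \<inter> To \<and>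
        int (supp D cg) = int (supp D c) - 1}"
proof -
  have fD: "finite D" and tD: "tids_distinct D" using assms(2) unfolding transaction_db_def by auto
  have fDm: "finite (D - {(j,To)})" using fD by simp
  note Sm = S_minus[OF tD assms(3)]
  have jTo: "\<And>X. X \<subseteq> To \<Longrightarrow> j \<in> supp_set D X" using assms(3) unfolding supp_set_def by blast
  show ?thesis
  proof (rule set_eqI, rule iffI)
    fix c assume "c \<in> closed_sets I D - closed_sets I (D - {(j, To)})"
    hence cc: "closed_in I D c" and nc: "\<not> closed_in I (D - {(j,To)}) c"
      unfolding closed_sets_def by auto
    have cI: "c \<subseteq> I" using closed_sub[OF cc] .
    obtain Y where y: "c \<subset> Y" "Y \<subseteq> I" "supp (D - {(j,To)}) Y = supp (D - {(j,To)}) c"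
      using not_closedE[OF nc cI] by blast
    have ne: "supp D Y \<noteq> supp D c" using closed_no[OF cc y(1,2)] .
    have sub: "supp_set D Y \<subseteq> supp_set D c" using S_mono[OF psubset_imp_subset[OF y(1)]] .
    have e1: "supp_set D Y - {j} = supp_set D c - {j}"
    proof -
      have "c \<subseteq> Y" using y(1) by (rule psubset_imp_subset)
      hence "supp_set (D - {(j,To)}) Y = supp_set (D - {(j,To)}) c" using S_eq[OF fDm _ y(3)] by blast
      thus ?thesis unfolding Sm .
    qed
    have neq: "supp_set D Y \<noteq> supp_set D c" using ne unfolding supp_def by auto
    have jc: "j \<in> supp_set D c" and jY: "j \<notin> supp_set D Y" and SY: "supp_set D Y = supp_set D c - {j}"
      using e1 sub neq by blast+
    define cg where "cg = cl I D Y"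
    have cgc: "closed_in I D cg" unfolding cg_def using cl_closed[OF fD tD y(2)] .
    have Scg: "supp_set D cg = supp_set D c - {j}" unfolding cg_def using S_cl[OF tD y(2)] SY by simp
    have "supp D cg = supp D c - 1" unfolding supp_def Scg using jc fin_S[OF fD] by simp
    moreover have "supp D c \<ge> 1" unfolding supp_def using jc fin_S[OF fD]
      by (metis One_nat_def Suc_leI card_gt_0_iff empty_iff)
    ultimately have i: "int (supp D cg) = int (supp D c) - 1" by simp
    have "cl I D c = cl I D cg \<inter> To"
    proof
      show "cl I D c \<subseteq> cl I D cg \<inter> To"
      proof
        fix i assume "i \<in> cl I D c"
        hence a: "i \<in> I" "\<And>j' Z. (j',Z) \<in> D \<Longrightarrow> j' \<in> supp_set D c \<Longrightarrow> i \<in> Z"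
          unfolding cl_def by auto
        have "i \<in> To" using a(2)[OF assms(3) jc] .
        moreover have "i \<in> cl I D cg" unfolding cl_def Scg using a by auto
        ultimately show "i \<in> cl I D cg \<inter> To" by blast
      qed
      show "cl I D cg \<inter> To \<subseteq> cl I D c"
      proof
        fix i assume "i \<in> cl I D cg \<inter> To"
        hence a: "i \<in> I" "i \<in> To" "\<And>j' Z. (j',Z) \<in> D \<Longrightarrow> j' \<in> supp_set D c - {j} \<Longrightarrow> i \<in> Z"
          unfolding cl_def Scg by auto
        have "\<And>j' Z. (j',Z) \<in> D \<Longrightarrow> j' \<in> supp_set D c \<Longrightarrow> i \<in> Z"
        proof -
          fix j' Z assume d: "(j',Z) \<in> D" "j' \<in> supp_set D c"
          show "i \<in> Z"
          proof (cases "j' = j")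
            case True
            hence "Z = To" using tD d(1) assms(3) unfolding tids_distinct_def by blast
            thus ?thesis using a(2) by simp
          next
            case False thus ?thesis using a(3) d by blast
          qed
        qed
        thus "i \<in> cl I D c" unfolding cl_def using a(1) by blast
      qed
    qed
    hence "c = cg \<inter> To" using closed_cl[OF tD cc] closed_cl[OF tD cgc] by simp
    thus "c \<in> {c \<in> closed_sets I D. \<exists>cg \<in> closed_sets I D. c = cg \<inter> To \<and>
        int (supp D cg) = int (supp D c) - 1}"
      using cc cgc i unfolding closed_sets_def by blast
  next
    fix c assume "c \<in> {c \<in> closed_sets I D. \<exists>cg \<in> closed_sets I D. c = cg \<inter> To \<and>
        int (supp D cg) = int (supp D c) - 1}"
    then obtain cg where cc: "closed_in I D c" and cgc: "closed_in I D cg" and ct: "c = cg \<inter> To"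
      and i: "int (supp D cg) = int (supp D c) - 1" unfolding closed_sets_def by blast
    have cgI: "cg \<subseteq> I" using closed_sub[OF cgc] .
    have ncg: "cg \<noteq> c" using i by auto
    hence psub: "c \<subset> cg" using ct by blast
    have nTo: "\<not> cg \<subseteq> To" using ct ncg by blast
    have jcg: "j \<notin> supp_set D cg" using nTo assms(3) tD unfolding supp_set_def tids_distinct_def by blast
    have jc: "j \<in> supp_set D c" using jTo ct by blast
    have "supp (D - {(j,To)}) cg = supp D cg" unfolding supp_def Sm using jcg by simp
    also have "\<dots> = supp D c - 1" using i by linarith
    also have "\<dots> = supp (D - {(j,To)}) c" unfolding supp_def Sm using jc fin_S[OF fD] by simp
    finally have "\<not> closed_in I (D - {(j,To)}) c" by (rule not_closedI[OF psub cgI])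
    thus "c \<in> closed_sets I D - closed_sets I (D - {(j, To)})"
      using cc unfolding closed_sets_def by blast
  qed
qed

end
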